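(* Let $P$ be a non-trivial classifier on $\mathbb{R}^n$ (i.e. its label set $L_P$ has more than one element) with infinite pointwise coverage. Then $P$ is a refined linear classifier.
   Context: A classifier is a partition $P$ of $\mathbb{R}^n$ together with a distinguished member $R \in P$, the refinement set, which may be empty and which is both meagre and Lebesgue null. The label set is $L_P = P \setminus \{R\}$ and the feature space is $\bigcup L_P$. $P$ is trivial if $L_P$ is a singleton and non-trivial otherwise. For $x \in \mathbb{R}^n$, $P(x)$ denotes the member of $P$ containing $x$. An anchor for $x$ is an open ball $A = B(c,r)$ with $x \in A \subseteq P(x)$; its coverage is $r$. The coverage of $P$ at $x$ is $C_P(x) = \sup\{ r : B(c,r) \text{ is an anchor for } x\}$ ($0$ if no anchor exists, $\infty$ if anchors of arbitrarily large radius exist). $P$ has infinite pointwise coverage if $C_P(x) = \infty$ for every $x$ in the feature space. A refined linear classifier is a classifier $P = \{M, N, R\}$ with $L_P = \{M, N\}$, where $R$ is an affine hyperplane and $M, N$ are the two open halfspaces on either side of $R$. *)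

theory Defs
  imports "HOL-Analysis.Analysis"
begin

definition nowhere_dense :: "'a::topological_space set \<Rightarrow> bool" where
  "nowhere_dense S \<longleftrightarrow> interior (closure S) = {}"

definition meagre :: "'a::topological_space set \<Rightarrow> bool" where
  "meagre S \<longleftrightarrow> (\<exists>F::nat \<Rightarrow> 'a set. (\<forall>k. nowhere_dense (F k)) \<and> S \<subseteq> (\<Union>k. F k))"

definition classifier :: "(real^'n) set set \<Rightarrow> (real^'n) set \<Rightarrow> bool" where
  "classifier P R \<longleftrightarrow>
     \<Union>P = UNIV \<and>
     (\<forall>A\<in>P. \<forall>B\<in>P. A \<noteq> B \<longrightarrow> A \<inter> B = {}) \<and>
     (\<forall>A\<in>P. A \<noteq> R \<longrightarrow> A \<noteq> {}) \<and>
     R \<in> P \<and> meagre R \<and> R \<in> null_sets lebesgue"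

definition label_set :: "'a set set \<Rightarrow> 'a set \<Rightarrow> 'a set set" where
  "label_set P R = P - {R}"

definition feature_space :: "'a set set \<Rightarrow> 'a set \<Rightarrow> 'a set" where
  "feature_space P R = \<Union>(label_set P R)"

definition nontrivial :: "'a set set \<Rightarrow> 'a set \<Rightarrow> bool" where
  "nontrivial P R \<longleftrightarrow> \<not> (\<exists>A. label_set P R = {A})"

definition cell :: "'a set set \<Rightarrow> 'a \<Rightarrow> 'a set" where
  "cell P x = (THE A. A \<in> P \<and> x \<in> A)"

definition anchor :: "(real^'n) set set \<Rightarrow> real^'n \<Rightarrow> real^'n \<Rightarrow> real \<Rightarrow> bool" where
  "anchor P x c r \<longleftrightarrow> x \<in> ball c r \<and> ball c r \<subseteq> cell P x"

definition coverage :: "(real^'n) set set \<Rightarrow> real^'n \<Rightarrow> ereal" where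
  "coverage P x = (if \<exists>c r. anchor P x c r
                   then Sup {ereal r | r. \<exists>c. anchor P x c r} else 0)"

definition infinite_pointwise_coverage :: "(real^'n) set set \<Rightarrow> (real^'n) set \<Rightarrow> bool" where
  "infinite_pointwise_coverage P R \<longleftrightarrow> (\<forall>x\<in>feature_space P R. coverage P x = \<infinity>)"

definition refined_linear_classifier :: "(real^'n) set set \<Rightarrow> (real^'n) set \<Rightarrow> bool" where
  "refined_linear_classifier P R \<longleftrightarrow> classifier P R \<and>
     (\<exists>a b. a \<noteq> 0 \<and> R = {x. a \<bullet> x = b} \<and>
        label_set P R = {{x. a \<bullet> x < b}, {x. a \<bullet> x > b}})"

end

theory Submission
  imports Defs
begin


lemma ball_not_null:
  fixes R :: "(real^'n) set"
  assumes "R \<in> null_sets lebesgue" "ball c e \<subseteq> R" "e > 0"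
  shows False
proof -
  have "negligible R" using assms(1) negligible_iff_null_sets by blast
  hence "negligible (ball c e)" using assms(2) negligible_subset by blast
  moreover have "ball c e \<noteq> {}" using assms(3) by simp
  ultimately show False using open_not_negligible[of "ball c e"] by simp
qed

lemma opp_dir:
  fixes u v :: "real^'n"
  assumes "norm u = 1" "norm v = 1" "{y. u \<bullet> y > s} \<subseteq> X" "{y. v \<bullet> y > t} \<subseteq> Y" "X \<inter> Y = {}"
  shows "v = - u"
proof (rule ccontr)
  assume "v \<noteq> - u"
  hence w: "u + v \<noteq> 0" by (metis add.commute add_eq_0_iff)
  have uu: "u \<bullet> u = 1" and vv: "v \<bullet> v = 1"
    using assms(1,2) by (simp_all add: power2_norm_eq_inner[symmetric])
  have "0 < (u + v) \<bullet> (u + v)" using w by simp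
  also have "(u + v) \<bullet> (u + v) = 2 + 2 * (u \<bullet> v)"
    using uu vv by (simp add: inner_add_left inner_add_right inner_commute)
  finally have q: "1 + u \<bullet> v > 0" by simp
  define T where "T = (\<bar>s\<bar> + \<bar>t\<bar> + 1) / (1 + u \<bullet> v)"
  define y where "y = T *\<^sub>R (u + v)"
  have "u \<bullet> y = T * (1 + u \<bullet> v)" unfolding y_def using uu
    by (simp add: inner_add_right)
  also have "\<dots> = \<bar>s\<bar> + \<bar>t\<bar> + 1" unfolding T_def using q by simp
  finally have 1: "u \<bullet> y > s" by linarith
  have "v \<bullet> y = T * (1 + u \<bullet> v)" unfolding y_def using vv
    by (simp add: inner_add_right inner_commute)
  also have "\<dots> = \<bar>s\<bar> + \<bar>t\<bar> + 1" unfolding T_def using q by simp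
  finally have 2: "v \<bullet> y > t" by linarith
  have "y \<in> X" using 1 assms(3) by blast
  moreover have "y \<in> Y" using 2 assms(4) by blast
  ultimately show False using assms(5) by blast
qed

lemma halfspace:
  fixes x :: "real^'n" and A :: "(real^'n) set"
  assumes "\<forall>k::nat. \<exists>c r. r \<ge> real k \<and> x \<in> ball c r \<and> ball c r \<subseteq> A"
  shows "\<exists>u. norm u = 1 \<and> {y. u \<bullet> y > u \<bullet> x} \<subseteq> A"
proof (cases "A = UNIV")
  case True
  then show ?thesis by (intro exI[of _ "axis undefined 1"]) simp
next
  case False
  then obtain z where z: "z \<notin> A" by blast
  obtain c where c: "\<forall>k. \<exists>r. r \<ge> real k \<and> x \<in> ball (c k) r \<and> ball (c k) r \<subseteq> A"
    using choice[OF assms] by blast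
  obtain r where cr0: "\<forall>k. r k \<ge> real k \<and> x \<in> ball (c k) (r k) \<and> ball (c k) (r k) \<subseteq> A"
    using choice[OF c] by blast
  have cr: "r k \<ge> real k \<and> x \<in> ball (c k) (r k) \<and> ball (c k) (r k) \<subseteq> A" for k
    using cr0 by blast
  have d: "norm (c k - x) \<ge> real k - norm (z - x)" for k
  proof -
    have "z \<notin> ball (c k) (r k)" using cr[of k] z by blast
    hence "dist (c k) z \<ge> r k" by simp
    moreover have "dist (c k) z \<le> norm (c k - x) + norm (z - x)"
      by (metis dist_norm dist_triangle2)
    ultimately show ?thesis using cr[of k] by linarith
  qed
  have dr: "norm (c k - x) < r k" for k using cr[of k] by (simp add: dist_norm norm_minus_commute)
  define u where "u k = (1 / norm (c k - x)) *\<^sub>R (c k - x)" for k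
  have ub: "u k \<in> cball 0 1" for k
    by (cases "c k = x") (simp_all add: u_def)
  have sc: "seq_compact (cball (0::real^'n) 1)" by (simp add: compact_imp_seq_compact)
  from seq_compactE[OF sc, of u] ub obtain l \<phi> where l: "l \<in> cball 0 1" "strict_mono (\<phi> :: nat \<Rightarrow> nat)" "(u \<circ> \<phi>) \<longlonglongrightarrow> l"
    by blast
  define C where "C = norm (z - x)"
  have phk: "real k \<le> real (\<phi> k)" for k using seq_suble[OF l(2)] by simp
  have un: "norm (u k) = 1" if "real k > C" for k
  proof -
    have "norm (c k - x) > 0" using d[of k] that unfolding C_def by linarith
    thus ?thesis by (simp add: u_def)
  qed
  have ev1: "\<forall>\<^sub>F k in sequentially. norm ((u \<circ> \<phi>) k) = 1"
  proof -
    obtain N :: nat where "real N > C" using reals_Archimedean2 by blast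
    have "norm ((u \<circ> \<phi>) k) = 1" if "k \<ge> N" for k
    proof -
      have "real N \<le> real k" using that by simp
      hence "real (\<phi> k) > C" using phk[of k] \<open>real N > C\<close> by linarith
      thus ?thesis using un[of "\<phi> k"] by simp
    qed
    thus ?thesis unfolding eventually_sequentially by blast
  qed
  have "(\<lambda>k. norm ((u \<circ> \<phi>) k)) \<longlonglongrightarrow> norm l" using tendsto_norm[OF l(3)] .
  hence "(\<lambda>k. 1) \<longlonglongrightarrow> norm l"
    using ev1 by (rule Lim_transform_eventually)
  hence nl: "norm l = 1" using LIMSEQ_const_iff by metis
  have "{y. l \<bullet> y > l \<bullet> x} \<subseteq> A"
  proof
    fix y assume "y \<in> {y. l \<bullet> y > l \<bullet> x}"
    hence p: "l \<bullet> (y - x) > 0" by (simp add: inner_diff_right)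
    define p where "p = l \<bullet> (y - x)"
    have "(\<lambda>k. (u \<circ> \<phi>) k \<bullet> (y - x)) \<longlonglongrightarrow> p"
      unfolding p_def by (intro tendsto_inner l(3) tendsto_const)
    hence e1: "\<forall>\<^sub>F k in sequentially. (u \<circ> \<phi>) k \<bullet> (y - x) > p / 2"
      using p unfolding p_def by (intro order_tendstoD) auto
    obtain N :: nat where N: "real N > C + (norm (y - x))^2 / p + 1" using reals_Archimedean2 by blast
    have e2: "\<forall>\<^sub>F k in sequentially. real (\<phi> k) > C + (norm (y - x))^2 / p + 1"
      unfolding eventually_sequentially
    proof (intro exI allI impI)
      fix k assume "N \<le> k"
      hence "real N \<le> real k" by simp
      thus "real (\<phi> k) > C + (norm (y - x))^2 / p + 1" using phk[of k] N by linarith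
    qed
    from eventually_happens'[OF _ eventually_conj[OF e1 e2]] obtain k where
      k1: "(u \<circ> \<phi>) k \<bullet> (y - x) > p / 2" and k2: "real (\<phi> k) > C + (norm (y - x))^2 / p + 1"
      by auto
    define m where "m = \<phi> k"
    define D where "D = norm (c m - x)"
    have D: "D > (norm (y - x))^2 / p + 1" using d[of m] k2 unfolding D_def C_def m_def by linarith
    hence Dp: "D > 0" using p unfolding p_def by (smt (verit) divide_nonneg_pos zero_le_power2)
    have cm: "c m - x = D *\<^sub>R u m" unfolding u_def D_def using Dp D_def by auto
    have um: "u m \<bullet> (y - x) > p / 2" using k1 unfolding m_def by simp
    have "D * p > (norm (y - x))^2"
    proof -
      have "D * p > ((norm (y - x))^2 / p + 1) * p" using D p unfolding p_def by simp
      also have "((norm (y - x))^2 / p + 1) * p = (norm (y - x))^2 + p"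
        using p unfolding p_def by (simp add: field_simps)
      finally show ?thesis using p unfolding p_def by linarith
    qed
    moreover have "D * (u m \<bullet> (y - x)) > D * (p / 2)" using um Dp by simp
    ultimately have big: "2 * (D * (u m \<bullet> (y - x))) > (norm (y - x))^2" by linarith
    have "(norm (y - c m))^2 = (norm ((y - x) - (c m - x)))^2" by simp
    also have "\<dots> = (norm (y - x))^2 - 2 * ((y - x) \<bullet> (c m - x)) + (norm (c m - x))^2"
      by (simp add: power2_norm_eq_inner inner_diff_left inner_diff_right inner_commute)
    also have "(y - x) \<bullet> (c m - x) = D * (u m \<bullet> (y - x))"
      unfolding cm by (simp add: inner_commute)
    finally have "(norm (y - c m))^2 < D^2" using big unfolding D_def by linarith
    hence "norm (y - c m) < D" using Dp by (smt (verit) power_mono norm_ge_zero)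
    hence "y \<in> ball (c m) (r m)" using dr[of m] unfolding D_def
      by (simp add: dist_norm norm_minus_commute)
    thus "y \<in> A" using cr[of m] by blast
  qed
  thus ?thesis using nl by blast
qed

lemma cell_eq:
  assumes "classifier P R" "A \<in> P" "x \<in> A"
  shows "cell P x = A"
  unfolding cell_def
proof (rule the_equality)
  show "A \<in> P \<and> x \<in> A" using assms by blast
  fix B assume "B \<in> P \<and> x \<in> B"
  thus "B = A" using assms unfolding classifier_def by blast
qed

lemma cov_big:
  fixes P :: "(real^'n) set set"
  assumes "coverage P x = \<infinity>"
  shows "\<forall>k::nat. \<exists>c r. r \<ge> real k \<and> x \<in> ball c r \<and> ball c r \<subseteq> cell P x"
proof
  fix k :: nat
  have ex: "\<exists>c r. anchor P x c r"
  proof (rule ccontr)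
    assume "\<not> ?thesis"
    hence "coverage P x = 0" unfolding coverage_def by (rule if_not_P)
    thus False using assms by simp
  qed
  hence "coverage P x = Sup {ereal r | r. \<exists>c. anchor P x c r}" unfolding coverage_def by (rule if_P)
  hence S: "Sup {ereal r | r. \<exists>c. anchor P x c r} = \<infinity>" using assms by simp
  show "\<exists>c r. r \<ge> real k \<and> x \<in> ball c r \<and> ball c r \<subseteq> cell P x"
  proof (rule ccontr)
    assume "\<not> ?thesis"
    hence "\<forall>e \<in> {ereal r | r. \<exists>c. anchor P x c r}. e \<le> ereal (real k)"
      unfolding anchor_def by force
    hence "Sup {ereal r | r. \<exists>c. anchor P x c r} \<le> ereal (real k)" by (simp add: Sup_le_iff)
    thus False using S by simp
  qed
qed

lemma slab_aux:
  fixes n p q s t :: real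
  assumes "n < (t - s) / 2" "\<bar>p\<bar> \<le> n" "p = q - (s + t) / 2"
  shows "s < q \<and> q < t"
proof -
  have "p \<le> n" "- p \<le> n" using assms(2) by (simp_all add: abs_le_iff)
  thus ?thesis using assms(1,3) by argo
qed

theorem theorem3:
  fixes P :: "(real^'n) set set" and R :: "(real^'n) set"
  assumes "classifier P R"
    and "nontrivial P R"
    and "infinite_pointwise_coverage P R"
  shows "refined_linear_classifier P R"
proof -
  note cls = assms(1)[unfolded classifier_def]
  have cover: "\<Union>P = UNIV" and disjP: "\<And>A B. A \<in> P \<Longrightarrow> B \<in> P \<Longrightarrow> A \<noteq> B \<Longrightarrow> A \<inter> B = {}"
    and neP: "\<And>A. A \<in> P \<Longrightarrow> A \<noteq> R \<Longrightarrow> A \<noteq> {}" and RP: "R \<in> P" and nullR: "R \<in> null_sets lebesgue"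
    using cls by auto
  define L where "L = label_set P R"
  have L: "L = P - {R}" unfolding L_def label_set_def by simp
  have PL: "P = insert R L" using L RP by blast
  have LP: "C \<in> P" "C \<noteq> R" if "C \<in> L" for C using that L by auto
  have big: "\<forall>k::nat. \<exists>c r. r \<ge> real k \<and> x \<in> ball c r \<and> ball c r \<subseteq> A" if "A \<in> L" "x \<in> A" for A x
  proof -
    have "x \<in> feature_space P R" using that unfolding feature_space_def L_def by blast
    hence "coverage P x = \<infinity>" using assms(3) unfolding infinite_pointwise_coverage_def by blast
    from cov_big[OF this] show ?thesis using cell_eq[OF assms(1), of A x] that L by auto
  qed
  have H: "\<exists>u. norm u = 1 \<and> {y. u \<bullet> y > u \<bullet> x} \<subseteq> A" if "A \<in> L" "x \<in> A" for A x
    using halfspace[OF big[OF that]] .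
  have O: "\<exists>e>0. ball x e \<subseteq> A" if h: "A \<in> L" "x \<in> A" for A x
  proof -
    obtain c r where cr: "x \<in> ball c r" "ball c r \<subseteq> A" using big[OF h] by blast
    obtain e where "e > 0" "ball x e \<subseteq> ball c r" using openE[OF open_ball cr(1)] by blast
    thus ?thesis using cr(2) by blast
  qed
  have ne: "A \<noteq> {}" if "A \<in> L" for A using LP[OF that] neP by blast
  have dj: "A \<inter> B = {}" if "A \<in> P" "B \<in> P" "A \<noteq> B" for A B using that disjP by blast
  have "L \<noteq> {}"
  proof
    assume "L = {}"
    hence "P = {R}" using PL by simp
    hence "R = UNIV" using cover by simp
    thus False using ball_not_null[of R 0 1] nullR by auto
  qed
  then obtain A B where AB: "A \<in> L" "B \<in> L" "A \<noteq> B"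
    using assms(2) unfolding nontrivial_def L_def[symmetric] by blast
  obtain a0 where a0: "a0 \<in> A" using ne AB by blast
  obtain b0 where b0: "b0 \<in> B" using ne AB by blast
  obtain a where a: "norm a = 1" "{y. a \<bullet> y > a \<bullet> a0} \<subseteq> A" using H[OF AB(1) a0] by blast
  obtain ub where ub: "norm ub = 1" "{y. ub \<bullet> y > ub \<bullet> b0} \<subseteq> B" using H[OF AB(2) b0] by blast
  have ABd: "A \<inter> B = {}" using dj[OF LP(1)[OF AB(1)] LP(1)[OF AB(2)] AB(3)] .
  have ubv: "ub = - a" using opp_dir[OF a(1) ub(1) a(2) ub(2) ABd] .
  have dirs: "(C \<noteq> B \<longrightarrow> uc = a) \<and> (C \<noteq> A \<longrightarrow> uc = - a)"
    if h: "C \<in> L" "norm uc = 1" "{y. uc \<bullet> y > uc \<bullet> x} \<subseteq> C" for C uc x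
  proof (intro conjI impI)
    assume "C \<noteq> B"
    hence "C \<inter> B = {}" using dj[OF LP(1)[OF h(1)] LP(1)[OF AB(2)]] by blast
    hence "ub = - uc" by (rule opp_dir[OF h(2) ub(1) h(3) ub(2)])
    thus "uc = a" using ubv by simp
  next
    assume "C \<noteq> A"
    hence "C \<inter> A = {}" using dj[OF LP(1)[OF h(1)] LP(1)[OF AB(1)]] by blast
    hence "a = - uc" by (rule opp_dir[OF h(2) a(1) h(3) a(2)])
    thus "uc = - a" by simp
  qed
  have a0': "a \<noteq> 0" using a(1) by auto
  have LAB: "L = {A, B}"
  proof -
    have "C = A \<or> C = B" if h: "C \<in> L" for C
    proof (rule ccontr)
      assume nn: "\<not> (C = A \<or> C = B)"
      obtain c0 where "c0 \<in> C" using ne h by blast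
      then obtain uc where uc: "norm uc = 1" "{y. uc \<bullet> y > uc \<bullet> c0} \<subseteq> C" using H h by blast
      have e1: "uc = a" and e2: "uc = -a" using dirs[OF h uc] nn by blast+
      have "uc \<bullet> a = a \<bullet> a" using e1 by simp
      moreover have "uc \<bullet> a = - (a \<bullet> a)" unfolding e2 by (simp only: inner_minus_left)
      ultimately have "a \<bullet> a = 0" by linarith
      thus False using a0' by simp
    qed
    thus ?thesis using AB by blast
  qed
  have Ahs: "{y. a \<bullet> y > a \<bullet> x} \<subseteq> A" if h: "x \<in> A" for x
  proof -
    obtain uc where "norm uc = 1" "{y. uc \<bullet> y > uc \<bullet> x} \<subseteq> A" using H[OF AB(1) h] by blast
    moreover have "uc = a" using dirs[OF AB(1) calculation] AB by blast
    ultimately show ?thesis by simp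
  qed
  have Bhs: "{y. a \<bullet> y < a \<bullet> z} \<subseteq> B" if h: "z \<in> B" for z
  proof -
    obtain uc where "norm uc = 1" "{y. uc \<bullet> y > uc \<bullet> z} \<subseteq> B" using H[OF AB(2) h] by blast
    moreover have "uc = - a" using dirs[OF AB(2) calculation] AB by blast
    ultimately show ?thesis by simp
  qed
  have aa: "a \<bullet> a = 1" using a(1) by (simp add: power2_norm_eq_inner[symmetric])
  have ord: "a \<bullet> z \<le> a \<bullet> x" if "x \<in> A" "z \<in> B" for x z
  proof (rule ccontr)
    assume nz: "\<not> a \<bullet> z \<le> a \<bullet> x"
    define y where "y = x + ((a \<bullet> z - a \<bullet> x) / 2) *\<^sub>R a"
    have "a \<bullet> y = a \<bullet> x + (a \<bullet> z - a \<bullet> x) / 2" unfolding y_def using aa by (simp add: inner_add_right)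
    note ay = this
    have "a \<bullet> x < a \<bullet> y" using ay nz by (simp add: field_simps)
    moreover have "a \<bullet> y < a \<bullet> z" using ay nz by (simp add: field_simps)
    ultimately have "y \<in> A" "y \<in> B" using Ahs[OF that(1)] Bhs[OF that(2)] by blast+
    thus False using ABd by blast
  qed
  define t where "t = Inf ((\<lambda>x. a \<bullet> x) ` A)"
  define s where "s = Sup ((\<lambda>x. a \<bullet> x) ` B)"
  have bb: "bdd_below ((\<lambda>x. a \<bullet> x) ` A)" by (rule bdd_belowI2[where m="a \<bullet> b0"]) (rule ord[OF _ b0])
  have ba: "bdd_above ((\<lambda>x. a \<bullet> x) ` B)" by (rule bdd_aboveI2[where M="a \<bullet> a0"]) (rule ord[OF a0])
  have tl: "t \<le> a \<bullet> x" if "x \<in> A" for x unfolding t_def using bb that by (simp add: cInf_lower)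
  have su: "a \<bullet> z \<le> s" if "z \<in> B" for z unfolding s_def using ba that by (simp add: cSup_upper)
  have st: "s \<le> t"
  proof -
    have "s \<le> a \<bullet> x" if "x \<in> A" for x unfolding s_def using ord that b0
      by (intro cSup_least) auto
    thus ?thesis unfolding t_def using a0 by (intro cInf_greatest) auto
  qed
  have Aeq: "A = {y. a \<bullet> y > t}"
  proof
    show "A \<subseteq> {y. a \<bullet> y > t}"
    proof
      fix x assume x: "x \<in> A"
      obtain e where e: "e > 0" "ball x e \<subseteq> A" using O[OF AB(1) x] by blast
      define x' where "x' = x - (e/2) *\<^sub>R a"
      have "x' \<in> ball x e" unfolding x'_def using e a(1) by (simp add: dist_norm)
      hence "x' \<in> A" using e(2) by blast
      hence "t \<le> a \<bullet> x'" by (rule tl)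
      moreover have "a \<bullet> x' = a \<bullet> x - e/2" unfolding x'_def using aa by (simp add: inner_diff_right)
      ultimately show "x \<in> {y. a \<bullet> y > t}" using e by simp
    qed
  next
    show "{y. a \<bullet> y > t} \<subseteq> A"
    proof
      fix y assume "y \<in> {y. a \<bullet> y > t}"
      hence "Inf ((\<lambda>x. a \<bullet> x) ` A) < a \<bullet> y" unfolding t_def by simp
      moreover have "(\<lambda>x. a \<bullet> x) ` A \<noteq> {}" using a0 by blast
      ultimately obtain w where "w \<in> (\<lambda>x. a \<bullet> x) ` A" "w < a \<bullet> y" using cInf_lessD by metis
      then obtain x where xx: "x \<in> A" "a \<bullet> x < a \<bullet> y" by blast
      have "y \<in> {y. a \<bullet> y > a \<bullet> x}" using xx(2) by simp
      thus "y \<in> A" using Ahs[OF xx(1)] by (rule subsetD[rotated])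
    qed
  qed
  have Beq: "B = {y. a \<bullet> y < s}"
  proof
    show "B \<subseteq> {y. a \<bullet> y < s}"
    proof
      fix x assume x: "x \<in> B"
      obtain e where e: "e > 0" "ball x e \<subseteq> B" using O[OF AB(2) x] by blast
      define x' where "x' = x + (e/2) *\<^sub>R a"
      have "x' \<in> ball x e" unfolding x'_def using e a(1) by (simp add: dist_norm)
      hence "x' \<in> B" using e(2) by blast
      hence "a \<bullet> x' \<le> s" by (rule su)
      moreover have "a \<bullet> x' = a \<bullet> x + e/2" unfolding x'_def using aa by (simp add: inner_add_right)
      ultimately show "x \<in> {y. a \<bullet> y < s}" using e by simp
    qed
  next
    show "{y. a \<bullet> y < s} \<subseteq> B"
    proof
      fix y assume "y \<in> {y. a \<bullet> y < s}"
      hence "a \<bullet> y < Sup ((\<lambda>x. a \<bullet> x) ` B)" unfolding s_def by simp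
      moreover have "(\<lambda>x. a \<bullet> x) ` B \<noteq> {}" using b0 by blast
      ultimately obtain w where "w \<in> (\<lambda>x. a \<bullet> x) ` B" "a \<bullet> y < w" using less_cSupD by metis
      then obtain x where xx: "x \<in> B" "a \<bullet> y < a \<bullet> x" by blast
      have "y \<in> {y. a \<bullet> y < a \<bullet> x}" using xx(2) by simp
      thus "y \<in> B" using Bhs[OF xx(1)] by (rule subsetD[rotated])
    qed
  qed
  have inR: "y \<in> R" if "y \<notin> A" "y \<notin> B" for y
  proof -
    have "y \<in> \<Union>P" using cover by simp
    then obtain C where "C \<in> P" "y \<in> C" by blast
    thus ?thesis using PL LAB that by auto
  qed
  have "s = t"
  proof (rule ccontr)
    assume "s \<noteq> t"
    hence st': "s < t" using st by simp
    define m where "m = ((s + t) / 2) *\<^sub>R a"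
    have "ball m ((t - s) / 2) \<subseteq> R"
    proof
      fix y assume "y \<in> ball m ((t - s) / 2)"
      hence "norm (y - m) < (t - s) / 2" by (simp add: dist_norm norm_minus_commute)
      moreover have "\<bar>a \<bullet> (y - m)\<bar> \<le> norm (y - m)"
        using Cauchy_Schwarz_ineq2[of a "y - m"] a(1) by simp
      moreover have "a \<bullet> (y - m) = a \<bullet> y - (s + t) / 2" unfolding m_def using aa
        by (simp add: inner_diff_right)
      note cc = calculation this
      have "s < a \<bullet> y \<and> a \<bullet> y < t" by (rule slab_aux[OF cc])
      hence "y \<notin> A" "y \<notin> B" unfolding Aeq Beq by simp_all
      thus "y \<in> R" by (rule inR)
    qed
    thus False using ball_not_null[of R m "(t - s) / 2"] nullR st' by simp
  qed
  have RA: "R \<noteq> A" "R \<noteq> B" using LP(2)[OF AB(1)] LP(2)[OF AB(2)] by auto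
  have Req: "R = {y. a \<bullet> y = t}"
  proof
    show "R \<subseteq> {y. a \<bullet> y = t}"
    proof
      fix y assume "y \<in> R"
      hence "y \<notin> A" "y \<notin> B" using dj[OF RP LP(1)[OF AB(1)] RA(1)] dj[OF RP LP(1)[OF AB(2)] RA(2)] by blast+
      thus "y \<in> {y. a \<bullet> y = t}" using Aeq Beq \<open>s = t\<close> by auto
    qed
    show "{y. a \<bullet> y = t} \<subseteq> R" using inR Aeq Beq \<open>s = t\<close> by auto
  qed
  show ?thesis unfolding refined_linear_classifier_def
  proof (intro conjI exI)
    show "classifier P R" by (rule assms(1))
    show "a \<noteq> 0" by (rule a0')
    show "R = {x. a \<bullet> x = t}" by (rule Req)
    show "label_set P R = {{x. a \<bullet> x < t}, {x. t < a \<bullet> x}}"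
      using LAB Aeq Beq \<open>s = t\<close> unfolding L_def by auto
  qed
qed

end
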